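(* For every $n \geq 2$, the set $\{d_{n1}\}$ is equidistributed.
   Context: A linear arrangement of $\{1,\ldots,n\}$ is a sequence $a_1\cdots a_n$ in which each of $1,\ldots,n$ appears exactly once. It contains the pattern $ij$ if $a_t=i$ and $a_{t+1}=j$ for some $t$; otherwise it avoids it. $\{d_{n1}\}$ is the set of linear arrangements of $\{1,\ldots,n\}$ that avoid all of the patterns $12, 23, \ldots, (n-1)n$ and contain the pattern $n1$. For a set $X$ of linear arrangements of $\{1,\ldots,n\}$ and $i\in\{1,\ldots,n\}$, the class $X^{(i)}$ is the set of arrangements in $X$ whose first entry is $i$. $X$ is called equidistributed if it is partitioned into its nonempty classes and all nonempty classes $X^{(i)}$ have the same cardinality. *)

theory Defs
  imports "HOL-Combinatorics.Permutations"
begin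

definition linear_arrangements :: "nat \<Rightarrow> nat list set" where
  "linear_arrangements n = {a. distinct a \<and> set a = {1..n}}"

definition contains_pattern :: "nat list \<Rightarrow> nat \<Rightarrow> nat \<Rightarrow> bool" where
  "contains_pattern a i j \<longleftrightarrow> (\<exists>t. Suc t < length a \<and> a ! t = i \<and> a ! Suc t = j)"

definition d_n1 :: "nat \<Rightarrow> nat list set" where
  "d_n1 n = {a \<in> linear_arrangements n.
              (\<forall>k\<in>{1..<n}. \<not> contains_pattern a k (Suc k)) \<and> contains_pattern a n 1}"

definition arr_class :: "nat list set \<Rightarrow> nat \<Rightarrow> nat list set" where
  "arr_class X i = {a \<in> X. a \<noteq> [] \<and> hd a = i}"

definition equidistributed :: "nat \<Rightarrow> nat list set \<Rightarrow> bool" where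
  "equidistributed n X \<longleftrightarrow>
     (\<forall>i\<in>{1..n}. \<forall>j\<in>{1..n}. arr_class X i \<noteq> {} \<longrightarrow> arr_class X j \<noteq> {} \<longrightarrow>
        card (arr_class X i) = card (arr_class X j))"

end

theory Submission
  imports Defs
begin

fun adj :: "nat list \<Rightarrow> (nat \<times> nat) set" where
  "adj (x # y # zs) = insert (x, y) (adj (y # zs))"
| "adj _ = {}"

lemma contains_adj: "contains_pattern a i j \<longleftrightarrow> (i, j) \<in> adj a"
proof (induction a rule: adj.induct)
  case (1 x y zs)
  have "contains_pattern (x # y # zs) i j \<longleftrightarrow> (i = x \<and> j = y) \<or> contains_pattern (y # zs) i j"
    unfolding contains_pattern_def
    apply (rule iffI)
     apply (elim exE conjE)
    subgoal for t by (cases t) auto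
    apply (elim disjE exE conjE)
     apply (rule exI[of _ 0]) apply simp
    subgoal for t by (rule exI[of _ "Suc t"]) simp
    done
  then show ?case using 1 by auto
qed (auto simp: contains_pattern_def)

lemma adj_set: "(x, y) \<in> adj l \<Longrightarrow> x \<in> set l \<and> y \<in> set l"
  by (induction l rule: adj.induct) auto

lemma adj_append: "adj (xs @ y # ys) = adj (xs @ [y]) \<union> adj (y # ys)"
  by (induction xs rule: adj.induct) auto

lemma adj_snoc: "adj (xs @ [y]) = adj xs \<union> (if xs = [] then {} else {(last xs, y)})"
  by (induction xs rule: adj.induct) auto

lemma adj_map: "adj (map f l) = (\<lambda>(x, y). (f x, f y)) ` adj l"
  by (induction l rule: adj.induct) auto

fun ins1 :: "nat \<Rightarrow> nat list \<Rightarrow> nat list" where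
  "ins1 n [] = []"
| "ins1 n (x # xs) = (if x = n then x # 1 # xs else x # ins1 n xs)"

lemma ins1_app: "n \<notin> set xs \<Longrightarrow> ins1 n (xs @ n # ys) = xs @ n # 1 # ys"
  by (induction xs) auto

definition tau :: "nat \<Rightarrow> nat \<Rightarrow> nat" where
  "tau n k = (if k = n then 2 else Suc k)"

definition Bs :: "nat \<Rightarrow> nat list set" where
  "Bs n = {b. distinct b \<and> set b = {2..n} \<and> (\<forall>k\<in>{2..n}. (k, tau n k) \<notin> adj b)}"

lemma d_char: "a \<in> d_n1 n \<longleftrightarrow> distinct a \<and> set a = {1..n} \<and>
   (\<forall>k\<in>{1..<n}. (k, Suc k) \<notin> adj a) \<and> (n, 1) \<in> adj a"
  unfolding d_n1_def linear_arrangements_def contains_adj by auto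

lemma adj_split: "(x, y) \<in> adj a \<Longrightarrow> \<exists>xs ys. a = xs @ x # y # ys"
proof (induction a rule: adj.induct)
  case (1 u v zs)
  show ?case
  proof (cases "(x,y) = (u,v)")
    case True then show ?thesis by (metis append_Nil prod.inject)
  next
    case False
    then have "(x,y) \<in> adj (v # zs)" using 1 by auto
    then obtain xs ys where "v # zs = xs @ x # y # ys" using 1 by blast
    then show ?thesis by (metis append_Cons)
  qed
qed auto

lemma adj_full: "adj (xs @ y # ys) = adj xs \<union> adj (y # ys) \<union> (if xs = [] then {} else {(last xs, y)})"
  by (subst adj_append) (simp add: adj_snoc)

lemma adj_cons: "adj (y # ys) = adj ys \<union> (if ys = [] then {} else {(y, hd ys)})"
  by (cases ys) auto

lemma rem_in:
  assumes n2: "n \<ge> 2" and a: "a \<in> d_n1 n"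
  shows "remove1 1 a \<in> Bs n \<and> ins1 n (remove1 1 a) = a \<and> (a \<noteq> [] \<longrightarrow> remove1 1 a \<noteq> [] \<and> hd (remove1 1 a) = hd a)"
proof -
  from a have da: "distinct a" "set a = {1..n}" "\<forall>k\<in>{1..<n}. (k, Suc k) \<notin> adj a" "(n,1) \<in> adj a"
    using d_char by auto
  obtain xs ys where a_eq: "a = xs @ n # 1 # ys" using adj_split[OF da(4)] by blast
  have nx: "n \<notin> set xs" "1 \<notin> set xs" "n \<notin> set ys" "1 \<notin> set ys" "n \<noteq> 1"
    using da(1) n2 unfolding a_eq by auto
  have r: "remove1 1 a = xs @ n # ys" unfolding a_eq using nx by (simp add: remove1_append)
  have "set (xs @ n # ys) = set a - {1}" unfolding a_eq using nx(2,4,5) by auto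
  moreover have "{1..n} - {1} = {2..(n::nat)}" by auto
  ultimately have setr: "set (xs @ n # ys) = {2..n}" using da(2) by simp
  have forb: "\<forall>k\<in>{2..n}. (k, tau n k) \<notin> adj (xs @ n # ys)"
  proof
    fix k assume k: "k \<in> {2..n}"
    show "(k, tau n k) \<notin> adj (xs @ n # ys)"
    proof
      assume h: "(k, tau n k) \<in> adj (xs @ n # ys)"
      have A: "adj a = adj xs \<union> adj ys \<union> {(n,1)} \<union> (if xs = [] then {} else {(last xs, n)}) \<union> (if ys = [] then {} else {(1, hd ys)})"
        unfolding a_eq adj_full adj_cons by auto
      have B: "adj (xs @ n # ys) = adj xs \<union> adj ys \<union> (if xs = [] then {} else {(last xs, n)}) \<union> (if ys = [] then {} else {(n, hd ys)})"
        unfolding adj_full adj_cons by auto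
      show False
      proof (cases "k = n")
        case True
        then have t: "tau n k = 2" by (simp add: tau_def)
        from h B True t consider "(n,2) \<in> adj xs" | "(n,2) \<in> adj ys" | "xs \<noteq> [] \<and> last xs = n" | "ys \<noteq> [] \<and> hd ys = 2"
          by (auto split: if_splits)
        then show False
        proof cases
          case 1 then show ?thesis using adj_set nx by blast
        next
          case 2 then show ?thesis using adj_set nx by blast
        next
          case 3 then show ?thesis using nx by auto
        next
          case 4 then have "(1, 2) \<in> adj a" using A by auto
          then show ?thesis using da(3)[rule_format, of 1] n2 by (simp add: numeral_2_eq_2)
        qed
      next
        case False
        then have t: "tau n k = Suc k" by (simp add: tau_def)
        have kk: "k \<in> {1..<n}" using k False by auto
        from h B t consider "(k, Suc k) \<in> adj xs" | "(k, Suc k) \<in> adj ys" | "xs \<noteq> [] \<and> last xs = k \<and> Suc k = n" | "ys \<noteq> [] \<and> k = n"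
          by (auto split: if_splits)
        then show False
        proof cases
          case 3 then have "(k, Suc k) \<in> adj a" using A by auto
          then show ?thesis using da(3) kk by auto
        next
          case 4 then show ?thesis using False by auto
        qed (use A da(3) kk in auto)
      qed
    qed
  qed
  have "xs @ n # ys \<in> Bs n" unfolding Bs_def using da(1) setr forb unfolding a_eq by auto
  moreover have "ins1 n (xs @ n # ys) = a" using ins1_app[OF nx(1)] a_eq by simp
  moreover have "hd (xs @ n # ys) = hd a" unfolding a_eq by (cases xs) auto
  ultimately show ?thesis using r by auto
qed

lemma ins_in:
  assumes n2: "n \<ge> 2" and b: "b \<in> Bs n"
  shows "ins1 n b \<in> d_n1 n \<and> remove1 1 (ins1 n b) = b \<and> ins1 n b \<noteq> [] \<and> hd (ins1 n b) = hd b"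
proof -
  from b have db: "distinct b" "set b = {2..n}" "\<forall>k\<in>{2..n}. (k, tau n k) \<notin> adj b"
    unfolding Bs_def by auto
  have "n \<in> set b" using db(2) n2 by auto
  then obtain xs ys where b_eq: "b = xs @ n # ys" by (meson split_list)
  have nx: "n \<notin> set xs" "1 \<notin> set xs" "n \<notin> set ys" "1 \<notin> set ys" "n \<noteq> 1"
    using db(1,2) n2 unfolding b_eq by auto
  have i: "ins1 n b = xs @ n # 1 # ys" unfolding b_eq using ins1_app[OF nx(1)] .
  have r: "remove1 1 (xs @ n # 1 # ys) = b" unfolding b_eq using nx by (simp add: remove1_append)
  have dist: "distinct (xs @ n # 1 # ys)" using db(1) nx unfolding b_eq by auto
  have "set (xs @ n # 1 # ys) = insert 1 (set b)" unfolding b_eq by auto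
  moreover have "insert 1 {2..n} = {1..(n::nat)}" using n2 by auto
  ultimately have seta: "set (xs @ n # 1 # ys) = {1..n}" using db(2) by simp
  have A: "adj (xs @ n # 1 # ys) = adj xs \<union> adj ys \<union> {(n,1)} \<union> (if xs = [] then {} else {(last xs, n)}) \<union> (if ys = [] then {} else {(1, hd ys)})"
    unfolding adj_full adj_cons by auto
  have B: "adj b = adj xs \<union> adj ys \<union> (if xs = [] then {} else {(last xs, n)}) \<union> (if ys = [] then {} else {(n, hd ys)})"
    unfolding b_eq adj_full adj_cons by auto
  have forb: "\<forall>k\<in>{1..<n}. (k, Suc k) \<notin> adj (xs @ n # 1 # ys)"
  proof
    fix k assume k: "k \<in> {1..<n}"
    show "(k, Suc k) \<notin> adj (xs @ n # 1 # ys)"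
    proof
      assume h: "(k, Suc k) \<in> adj (xs @ n # 1 # ys)"
      show False
      proof (cases "k = 1")
        case True
        from h A True nx(5) consider "(1, Suc 1) \<in> adj xs" | "(1, Suc 1) \<in> adj ys" | "xs \<noteq> [] \<and> last xs = 1" | "ys \<noteq> [] \<and> hd ys = 2"
          by (auto split: if_splits)
        then show False
        proof cases
          case 1 then show ?thesis using adj_set nx by blast
        next
          case 2 then show ?thesis using adj_set nx by blast
        next
          case 3 then show ?thesis using nx(2) by (metis last_in_set)
        next
          case 4 then have "(n, 2) \<in> adj b" using B by auto
          then show ?thesis using db(3)[rule_format, of n] n2 by (simp add: tau_def)
        qed
      next
        case False
        then have kk: "k \<in> {2..n}" "tau n k = Suc k" using k by (auto simp: tau_def)
        from h A consider "(k, Suc k) \<in> adj xs" | "(k, Suc k) \<in> adj ys" | "xs \<noteq> [] \<and> last xs = k \<and> Suc k = n" | "k = n" | "ys \<noteq> [] \<and> k = 1"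
          by (auto split: if_splits)
        then show False
        proof cases
          case 4 then show ?thesis using k by simp
        next
          case 5 then show ?thesis using False by blast
        next
          case 1 then have "(k, tau n k) \<in> adj b" using B kk(2) by simp
          then show ?thesis using db(3) kk(1) by blast
        next
          case 2 then have "(k, tau n k) \<in> adj b" using B kk(2) by simp
          then show ?thesis using db(3) kk(1) by blast
        next
          case 3 then have "(k, tau n k) \<in> adj b" using B kk(2) by simp
          then show ?thesis using db(3) kk(1) by blast
        qed
      qed
    qed
  qed
  have nin: "(n, 1) \<in> adj (xs @ n # 1 # ys)" using A by auto
  have "xs @ n # 1 # ys \<in> d_n1 n" unfolding d_char using dist seta forb nin by blast
  moreover have "hd (xs @ n # 1 # ys) = hd b" unfolding b_eq by (cases xs) auto
  ultimately show ?thesis unfolding i using r by simp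
qed

lemma tau_inj: "n \<ge> 2 \<Longrightarrow> inj_on (tau n) {2..n}"
  by (auto simp: inj_on_def tau_def split: if_splits)

lemma tau_img: "n \<ge> 2 \<Longrightarrow> tau n ` {2..n} = {2..n}"
proof
  assume n2: "n \<ge> 2"
  show "tau n ` {2..n} \<subseteq> {2..n}" using n2 by (auto simp: tau_def)
  show "{2..n} \<subseteq> tau n ` {2..n}"
  proof
    fix x assume x: "x \<in> {2..n}"
    show "x \<in> tau n ` {2..n}"
    proof (cases "x = 2")
      case True then show ?thesis using n2 by (intro image_eqI[of _ _ n]) (auto simp: tau_def)
    next
      case False then show ?thesis using x by (intro image_eqI[of _ _ "x - 1"]) (auto simp: tau_def)
    qed
  qed
qed

lemma map_tau_in:
  assumes n2: "n \<ge> 2" and b: "b \<in> Bs n"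
  shows "map (tau n) b \<in> Bs n"
proof -
  from b have db: "distinct b" "set b = {2..n}" "\<forall>k\<in>{2..n}. (k, tau n k) \<notin> adj b"
    unfolding Bs_def by auto
  have "distinct (map (tau n) b)" using db tau_inj[OF n2] by (simp add: distinct_map)
  moreover have "set (map (tau n) b) = {2..n}" using db(2) tau_img[OF n2] by simp
  moreover have "\<forall>k\<in>{2..n}. (k, tau n k) \<notin> adj (map (tau n) b)"
  proof (intro ballI notI)
    fix k assume k: "k \<in> {2..n}" and h: "(k, tau n k) \<in> adj (map (tau n) b)"
    then obtain x y where xy: "(x, y) \<in> adj b" "tau n x = k" "tau n y = tau n k"
      unfolding adj_map by auto
    have "x \<in> {2..n}" "y \<in> {2..n}" using adj_set[OF xy(1)] db(2) by auto
    then have "y = k" using xy(3) k tau_inj[OF n2] by (auto dest: inj_onD)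
    then show False using xy db(3) \<open>x \<in> {2..n}\<close> by auto
  qed
  ultimately show ?thesis unfolding Bs_def by auto
qed

lemma finite_Bs: "finite (Bs n)"
proof (rule finite_subset)
  show "Bs n \<subseteq> {xs. set xs \<subseteq> {2..n} \<and> length xs \<le> n}"
    unfolding Bs_def using distinct_card[symmetric] by (force)
  show "finite {xs. set xs \<subseteq> {2..n} \<and> length xs \<le> n}"
    by (rule finite_lists_length_le) simp
qed

lemma cls_eq:
  assumes n2: "n \<ge> 2"
  shows "card (arr_class (d_n1 n) i) = card (arr_class (Bs n) i)"
proof -
  have "bij_betw (remove1 1) (arr_class (d_n1 n) i) (arr_class (Bs n) i)"
  proof (rule bij_betw_byWitness[where f' = "ins1 n"])
    show "\<forall>a\<in>arr_class (d_n1 n) i. ins1 n (remove1 1 a) = a"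
      using rem_in[OF n2] unfolding arr_class_def by auto
    show "\<forall>a\<in>arr_class (Bs n) i. remove1 1 (ins1 n a) = a"
      using ins_in[OF n2] unfolding arr_class_def by auto
    show "remove1 1 ` arr_class (d_n1 n) i \<subseteq> arr_class (Bs n) i"
      using rem_in[OF n2] unfolding arr_class_def by auto
    show "ins1 n ` arr_class (Bs n) i \<subseteq> arr_class (d_n1 n) i"
      using ins_in[OF n2] unfolding arr_class_def by auto
  qed
  then show ?thesis by (rule bij_betw_same_card)
qed

lemma cls1_empty:
  assumes n2: "n \<ge> 2"
  shows "arr_class (d_n1 n) 1 = {}"
proof (rule ccontr)
  assume "arr_class (d_n1 n) 1 \<noteq> {}"
  then obtain a where a: "a \<in> d_n1 n" "a \<noteq> []" "hd a = 1" unfolding arr_class_def by auto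
  with rem_in[OF n2 a(1)] have "remove1 1 a \<in> Bs n" "remove1 1 a \<noteq> []" "hd (remove1 1 a) = 1"
    by auto
  then have "1 \<in> set (remove1 1 a)" by (metis hd_in_set)
  moreover have "set (remove1 1 a) = {2..n}" using \<open>remove1 1 a \<in> Bs n\<close> unfolding Bs_def by auto
  ultimately show False by auto
qed

lemma step_le:
  assumes n2: "n \<ge> 2" and i: "i \<in> {2..n}"
  shows "card (arr_class (Bs n) i) \<le> card (arr_class (Bs n) (tau n i))"
proof (rule card_inj_on_le[where f = "map (tau n)"])
  show "inj_on (map (tau n)) (arr_class (Bs n) i)"
  proof (rule inj_onI)
    fix x y assume x: "x \<in> arr_class (Bs n) i" and y: "y \<in> arr_class (Bs n) i"
      and e: "map (tau n) x = map (tau n) y"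
    have "set x \<union> set y \<subseteq> {2..n}" using x y unfolding arr_class_def Bs_def by auto
    then have "inj_on (tau n) (set x \<union> set y)" using tau_inj[OF n2] inj_on_subset by blast
    then show "x = y" using e map_inj_on by blast
  qed
  show "map (tau n) ` arr_class (Bs n) i \<subseteq> arr_class (Bs n) (tau n i)"
    using map_tau_in[OF n2] unfolding arr_class_def by (auto simp: hd_map)
  show "finite (arr_class (Bs n) (tau n i))"
    using finite_Bs unfolding arr_class_def by auto
qed

lemma all_eq:
  assumes n2: "n \<ge> 2" and i: "i \<in> {2..n}"
  shows "card (arr_class (Bs n) i) = card (arr_class (Bs n) 2)"
proof -
  define f where "f m = card (arr_class (Bs n) (m + 2))" for m
  have st: "f k \<le> f (Suc k)" if "k < n - 2" for k
  proof -
    have "k + 2 \<in> {2..n}" "tau n (k + 2) = Suc k + 2" using that by (auto simp: tau_def)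
    then show ?thesis unfolding f_def using step_le[OF n2] by metis
  qed
  have wrap: "f (n - 2) \<le> f 0"
  proof -
    have "n - 2 + 2 = n" using n2 by simp
    moreover have "tau n n = 0 + 2" by (simp add: tau_def)
    ultimately show ?thesis unfolding f_def using step_le[OF n2, of n] n2 by simp
  qed
  have up: "f a \<le> f b" if "a \<le> b" "b \<le> n - 2" for a b
    using that(1)
  proof (induction b rule: dec_induct)
    case base then show ?case by simp
  next
    case (step k) then show ?case using st[of k] that(2) by simp
  qed
  have m: "i - 2 \<le> n - 2" using i by auto
  have "f (i - 2) = f 0" using up[OF _ m, of 0] up[OF m order_refl] wrap by simp
  moreover have "i - 2 + 2 = i" using i by auto
  ultimately show ?thesis unfolding f_def by (metis add_0)
qed

theorem proposition4p9:
  fixes n :: nat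
  assumes "n \<ge> 2"
  shows "equidistributed n (d_n1 n)"
  unfolding equidistributed_def
proof (intro ballI impI)
  fix i j assume i: "i \<in> {1..n}" and j: "j \<in> {1..n}"
    and ni: "arr_class (d_n1 n) i \<noteq> {}" and nj: "arr_class (d_n1 n) j \<noteq> {}"
  have "i \<noteq> 1" "j \<noteq> 1" using ni nj cls1_empty[OF assms] by auto
  then have "i \<in> {2..n}" "j \<in> {2..n}" using i j by auto
  then show "card (arr_class (d_n1 n) i) = card (arr_class (d_n1 n) j)"
    using cls_eq[OF assms] all_eq[OF assms] by metis
qed

end
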